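(* Let $G$ be an abelian, second countable, locally compact group with Haar measure $\mu$ and $(\Lambda_n)$ a F\o lner sequence in $G$. Let $(A,\omega,\tau,G)$ be a C*-dynamical system which is $M$-asymptotically abelian relative to $(\Lambda_n)$, with $M\subset\mathrm{Hom}(G)$ translational. Set $\varphi_0(g)=e$ for all $g\in G$. Assume that for some $k\in\mathbb{N}$, \[ \lim_{n\to\infty}\frac{1}{\mu(\Lambda_n)}\int_{\Lambda_n}\omega\left(\prod_{j=0}^{k-1}\tau_{\varphi_j(g)}(a_j)\right)dg=\prod_{j=0}^{k-1}\omega(a_j) \] (in particular that the limit exists) for all $a_0,\dots,a_{k-1}\in A$ and all $\varphi_1,\dots,\varphi_{k-1}\in M$ with $\varphi_j\neq\varphi_l$ whenever $j\ne l$. Given $a_1,\dots,a_k\in A$ and $\varphi_1,\dots,\varphi_k\in M$ with $\varphi_j\ne\varphi_l$ whenever $j\ne l$, set $\kappa:=\prod_{j=1}^k\omega(a_j)$ and \[ u_h:=\iota\left(\prod_{j=1}^k\tau_{\varphi_j(h)}(a_j)\right)-\kappa\Omega\quad(h\in G). \] Then $\gamma_h:=\lim_{n\to\infty}\frac{1}{\mu(\Lambda_n)}\int_{\Lambda_n}\langle u_g,u_{gh}\rangle\,dg$ exists and \[ \gamma_h=\prod_{j=1}^k\omega\left(a_j^*\tau_{\varphi_j(h)}(a_j)\right)-|\kappa|^2 \] for all $h\in G$.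
   Context: $G$ is written multiplicatively with identity $e$; $\mathrm{Hom}(G)$ is the set of group homomorphisms $G\to G$. A F\o lner sequence is a sequence $(\Lambda_n)$ of compact subsets with $\mu(\Lambda_n)>0$ and $\lim_n\mu(\Lambda_n\,\Delta\,(\Lambda_ng))/\mu(\Lambda_n)=0$ for all $g$. A C*-dynamical system $(A,\omega,\tau,G)$: $A$ a unital C*-algebra, $\omega$ a state, $\tau_g$ $*$-automorphisms with $\tau_g\tau_h=\tau_{gh}$, $\tau_e=\mathrm{id}$, $g\mapsto\omega(a\tau_g(b))$ Borel measurable, $\omega\circ\tau_g=\omega$. It is $M$-asymptotically abelian relative to $(\Lambda_n)$ if $g\mapsto\tau_{\varphi(g)}(b)$ is continuous and $\lim_n\frac{1}{\mu(\Lambda_n)}\int_{\Lambda_n}\|a\tau_{\varphi(g)}(b)-\tau_{\varphi(g)}(b)a\|\,dg=0$ for all $a,b\in A$, $\varphi\in M$. $M$ is translational if for $\varphi_1\ne\varphi_2$ in $M$, $g\mapsto\varphi_2(g)^{-1}\varphi_1(g)$ is in $M$. $(H,\iota)$ is a GNS representation of $(A,\omega)$: $H$ a Hilbert space and $\iota:A\to H$ linear with dense range and $\langle\iota(a),\iota(b)\rangle=\omega(a^*b)$; $\Omega:=\iota(1)$. Inner products are conjugate linear in the first slot; $\prod_{j=0}^k b_j=b_0\cdots b_k$ in order. *)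

theory Defs
  imports "HOL-Analysis.Analysis"
begin

text \<open>The abelian group G is written additively (group operation +, identity 0,
  inverse uminus); this is only a change of notation for an abelian group.\<close>

text \<open>Haar measure on a (second countable, locally compact Hausdorff) abelian group:
  a Borel measure, finite on compact sets, positive on nonempty open sets,
  and translation invariant.  (On a second countable locally compact Hausdorff
  space such a measure is automatically regular / Radon.)\<close>
definition haar_measure :: "'g::topological_ab_group_add measure \<Rightarrow> bool" where
  "haar_measure \<mu> \<longleftrightarrow>
     sets \<mu> = sets borel \<and>
     (\<forall>K. compact K \<longrightarrow> emeasure \<mu> K < \<infinity>) \<and>
     (\<forall>U. open U \<and> U \<noteq> {} \<longrightarrow> emeasure \<mu> U > 0) \<and>
     (\<forall>g. \<forall>A\<in>sets borel. emeasure \<mu> ((\<lambda>x. g + x) ` A) = emeasure \<mu> A)"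

definition folner_sequence :: "'g::topological_ab_group_add measure \<Rightarrow> (nat \<Rightarrow> 'g set) \<Rightarrow> bool" where
  "folner_sequence \<mu> \<Lambda> \<longleftrightarrow>
     (\<forall>n. compact (\<Lambda> n) \<and> emeasure \<mu> (\<Lambda> n) > 0) \<and>
     (\<forall>g. (\<lambda>n. measure \<mu> ((\<Lambda> n - (\<lambda>x. x + g) ` \<Lambda> n) \<union> ((\<lambda>x. x + g) ` \<Lambda> n - \<Lambda> n))
                 / measure \<mu> (\<Lambda> n)) \<longlonglongrightarrow> 0)"

definition favg :: "'g measure \<Rightarrow> 'g set \<Rightarrow> ('g \<Rightarrow> 'b::{banach, second_countable_topology}) \<Rightarrow> 'b" where
  "favg \<mu> L f = (1 / measure \<mu> L) *\<^sub>R (LINT g:L|\<mu>. f g)"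

definition complex_scalar :: "(complex \<Rightarrow> 'v::real_normed_vector \<Rightarrow> 'v) \<Rightarrow> bool" where
  "complex_scalar sc \<longleftrightarrow>
     (\<forall>c x y. sc c (x + y) = sc c x + sc c y) \<and>
     (\<forall>c d x. sc (c + d) x = sc c x + sc d x) \<and>
     (\<forall>c d x. sc (c * d) x = sc c (sc d x)) \<and>
     (\<forall>r x. sc (complex_of_real r) x = r *\<^sub>R x) \<and>
     (\<forall>c x. norm (sc c x) = cmod c * norm x)"

definition cstar_algebra :: "(complex \<Rightarrow> 'a::{real_normed_algebra_1, banach} \<Rightarrow> 'a) \<Rightarrow> ('a \<Rightarrow> 'a) \<Rightarrow> bool" where
  "cstar_algebra sc star \<longleftrightarrow>
     complex_scalar sc \<and>
     (\<forall>c a b. sc c (a * b) = sc c a * b \<and> sc c (a * b) = a * sc c b) \<and>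
     (\<forall>a b. star (a + b) = star a + star b) \<and>
     (\<forall>c a. star (sc c a) = sc (cnj c) (star a)) \<and>
     (\<forall>a b. star (a * b) = star b * star a) \<and>
     (\<forall>a. star (star a) = a) \<and>
     (\<forall>a. norm (star a * a) = norm a ^ 2)"

definition is_state :: "(complex \<Rightarrow> 'a::{real_normed_algebra_1, banach} \<Rightarrow> 'a) \<Rightarrow> ('a \<Rightarrow> 'a) \<Rightarrow> ('a \<Rightarrow> complex) \<Rightarrow> bool" where
  "is_state sc star \<omega> \<longleftrightarrow>
     (\<forall>a b. \<omega> (a + b) = \<omega> a + \<omega> b) \<and>
     (\<forall>c a. \<omega> (sc c a) = c * \<omega> a) \<and>
     (\<forall>a. Im (\<omega> (star a * a)) = 0 \<and> Re (\<omega> (star a * a)) \<ge> 0) \<and>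
     \<omega> 1 = 1"

definition star_automorphism :: "(complex \<Rightarrow> 'a::{real_normed_algebra_1, banach} \<Rightarrow> 'a) \<Rightarrow> ('a \<Rightarrow> 'a) \<Rightarrow> ('a \<Rightarrow> 'a) \<Rightarrow> bool" where
  "star_automorphism sc star T \<longleftrightarrow>
     bij T \<and>
     (\<forall>a b. T (a + b) = T a + T b) \<and>
     (\<forall>c a. T (sc c a) = sc c (T a)) \<and>
     (\<forall>a b. T (a * b) = T a * T b) \<and>
     (\<forall>a. T (star a) = star (T a))"

definition cstar_dynamical_system ::
  "(complex \<Rightarrow> 'a::{real_normed_algebra_1, banach} \<Rightarrow> 'a) \<Rightarrow> ('a \<Rightarrow> 'a) \<Rightarrow> ('a \<Rightarrow> complex)
   \<Rightarrow> ('g::{topological_ab_group_add} \<Rightarrow> 'a \<Rightarrow> 'a) \<Rightarrow> bool" where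
  "cstar_dynamical_system sc star \<omega> \<tau> \<longleftrightarrow>
     cstar_algebra sc star \<and> is_state sc star \<omega> \<and>
     (\<forall>g. star_automorphism sc star (\<tau> g)) \<and>
     (\<forall>g h. \<tau> g \<circ> \<tau> h = \<tau> (g + h)) \<and> \<tau> 0 = id \<and>
     (\<forall>a b. (\<lambda>g. \<omega> (a * \<tau> g b)) \<in> borel_measurable borel) \<and>
     (\<forall>g a. \<omega> (\<tau> g a) = \<omega> a)"

definition group_hom :: "('g::ab_group_add \<Rightarrow> 'g) \<Rightarrow> bool" where
  "group_hom \<phi> \<longleftrightarrow> (\<forall>g h. \<phi> (g + h) = \<phi> g + \<phi> h)"

definition asymptotically_abelian ::
  "('g::topological_ab_group_add \<Rightarrow> 'g) set \<Rightarrow> 'g measure \<Rightarrow> (nat \<Rightarrow> 'g set)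
   \<Rightarrow> ('g \<Rightarrow> 'a::{real_normed_algebra_1, banach} \<Rightarrow> 'a) \<Rightarrow> bool" where
  "asymptotically_abelian M \<mu> \<Lambda> \<tau> \<longleftrightarrow>
     (\<forall>\<phi>\<in>M. \<forall>a b.
        continuous_on UNIV (\<lambda>g. \<tau> (\<phi> g) b) \<and>
        (\<lambda>n. favg \<mu> (\<Lambda> n) (\<lambda>g. norm (a * \<tau> (\<phi> g) b - \<tau> (\<phi> g) b * a))) \<longlonglongrightarrow> 0)"

text \<open>Translational: in additive notation, phi2(g)^{-1} phi1(g) is phi1 g - phi2 g.\<close>
definition translational :: "('g::ab_group_add \<Rightarrow> 'g) set \<Rightarrow> bool" where
  "translational M \<longleftrightarrow> (\<forall>\<phi>1\<in>M. \<forall>\<phi>2\<in>M. \<phi>1 \<noteq> \<phi>2 \<longrightarrow> (\<lambda>g. \<phi>1 g - \<phi>2 g) \<in> M)"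

definition hilbert_space :: "(complex \<Rightarrow> 'h::{real_normed_vector, banach} \<Rightarrow> 'h) \<Rightarrow> ('h \<Rightarrow> 'h \<Rightarrow> complex) \<Rightarrow> bool" where
  "hilbert_space scH ip \<longleftrightarrow>
     complex_scalar scH \<and>
     (\<forall>x y z. ip x (y + z) = ip x y + ip x z) \<and>
     (\<forall>x c y. ip x (scH c y) = c * ip x y) \<and>
     (\<forall>x y. ip y x = cnj (ip x y)) \<and>
     (\<forall>x. ip x x = complex_of_real ((norm x)\<^sup>2))"

definition gns_representation ::
  "(complex \<Rightarrow> 'a::{real_normed_algebra_1, banach} \<Rightarrow> 'a) \<Rightarrow> ('a \<Rightarrow> 'a) \<Rightarrow> ('a \<Rightarrow> complex)
   \<Rightarrow> (complex \<Rightarrow> 'h::{real_normed_vector, banach} \<Rightarrow> 'h) \<Rightarrow> ('h \<Rightarrow> 'h \<Rightarrow> complex) \<Rightarrow> ('a \<Rightarrow> 'h) \<Rightarrow> bool" where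
  "gns_representation sc star \<omega> scH ip \<iota> \<longleftrightarrow>
     hilbert_space scH ip \<and>
     (\<forall>a b. \<iota> (a + b) = \<iota> a + \<iota> b) \<and>
     (\<forall>c a. \<iota> (sc c a) = scH c (\<iota> a)) \<and>
     closure (range \<iota>) = UNIV \<and>
     (\<forall>a b. ip (\<iota> a) (\<iota> b) = \<omega> (star a * b))"

end

theory Submission
  imports Defs "HOL-Computational_Algebra.Formal_Power_Series"
begin



lemma gbin_half_bound: "\<bar>(1/2::real) gchoose n\<bar> \<le> 1"
proof (induction n)
  case 0 then show ?case by simp
next
  case (Suc n)
  have e: "of_nat (Suc n) * ((1/2::real) gchoose Suc n) = (1/2 - of_nat n) * ((1/2) gchoose n)"
    using gbinomial_absorption[of n "1/2::real"] gbinomial_absorb_comp[of "1/2::real" n] by simp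
  have "\<bar>1/2 - real n\<bar> \<le> real (Suc n)" by simp
  hence "\<bar>(1/2 - of_nat n) * ((1/2::real) gchoose n)\<bar> \<le> real (Suc n)"
    using Suc.IH by (simp add: abs_mult mult_mono' order_trans[OF mult_left_mono] )
  hence "real (Suc n) * \<bar>(1/2::real) gchoose Suc n\<bar> \<le> real (Suc n) * 1"
    using e by (metis abs_mult abs_of_nat mult.right_neutral of_nat_Suc)
  thus ?case by (simp del: of_nat_Suc)
qed




lemma one_gchoose_ge2: "n \<ge> 2 \<Longrightarrow> (1::real) gchoose n = 0"
proof -
  assume "n \<ge> 2"
  then obtain m where m: "n = Suc (Suc m)" by (metis add_2_eq_Suc le_Suc_ex)
  show ?thesis unfolding m gbinomial_Suc by (simp add: prod.atLeast0_atMost_Suc_shift) linarith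
qed

lemma sqrt_exists:
  fixes y :: "'a::{real_normed_algebra_1,banach}"
  assumes ny: "norm y < 1"
    and sadd: "\<And>a b. star (a + b) = star a + star b"
    and sscale: "\<And>r a. star (r *\<^sub>R a) = r *\<^sub>R star a"
    and snorm: "\<And>a. norm (star a) = norm a"
    and smult: "\<And>a b. star (a * b) = star b * star a"
    and s1: "star 1 = 1" and sy: "star y = y"
  shows "\<exists>s. star s = s \<and> s * s = 1 - y"
proof -
  define c where "c n = ((1/2::real) gchoose n) * (-1)^n" for n
  define f where "f n = c n *\<^sub>R y ^ n" for n
  have cb: "\<bar>c n\<bar> \<le> 1" for n using gbin_half_bound[of n] by (simp add: c_def abs_mult)
  have nf: "norm (f n) \<le> norm y ^ n" for n
  proof -
    have "norm (f n) = \<bar>c n\<bar> * norm (y ^ n)" by (simp add: f_def)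
    also have "\<dots> \<le> 1 * norm y ^ n"
      by (intro mult_mono cb norm_power_ineq) auto
    finally show ?thesis by simp
  qed
  have sumn: "summable (\<lambda>n. norm (f n))"
    by (rule summable_comparison_test[OF _ summable_geometric[of "norm y"]]) (use nf ny in auto)
  have blin: "bounded_linear star"
    by (rule bounded_linear_intro[of _ 1]) (auto simp: sadd sscale snorm)
  have spow: "star (y ^ n) = y ^ n" for n
    by (induction n) (auto simp: s1 smult sy power_commutes)
  define s where "s = suminf f"
  have sf: "summable f" using sumn summable_norm_cancel by blast
  have "star s = (\<Sum>n. star (f n))"
    unfolding s_def using bounded_linear.suminf[OF blin sf] by simp
  also have "\<dots> = s" unfolding s_def f_def by (simp add: sscale spow)
  finally have ss: "star s = s" .
  have cp: "(\<lambda>k. \<Sum>i\<le>k. f i * f (k - i)) sums (s * s)"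
    unfolding s_def by (rule Cauchy_product_sums[OF sumn sumn])
  have tm: "(\<Sum>i\<le>k. f i * f (k - i)) = ((-1)^k * ((1::real) gchoose k)) *\<^sub>R y ^ k" for k
  proof -
    have "(\<Sum>i\<le>k. f i * f (k - i)) = (\<Sum>i\<le>k. (c i * c (k - i)) *\<^sub>R y ^ k)"
      by (intro sum.cong refl) (auto simp: f_def power_add[symmetric])
    also have "\<dots> = (\<Sum>i\<le>k. c i * c (k - i)) *\<^sub>R y ^ k" by (simp add: scaleR_sum_left)
    also have "(\<Sum>i\<le>k. c i * c (k - i)) = (-1)^k * (\<Sum>i\<le>k. ((1/2::real) gchoose i) * ((1/2) gchoose (k - i)))"
      unfolding sum_distrib_left
      by (intro sum.cong refl) (auto simp: c_def power_add[symmetric])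
    also have "(\<Sum>i\<le>k. ((1/2::real) gchoose i) * ((1/2) gchoose (k - i))) = 1 gchoose k"
      using gbinomial_Vandermonde[of "1/2::real" "1/2" k] by (simp add: atMost_atLeast0)
    finally show ?thesis .
  qed
  have "(\<lambda>k. ((-1)^k * ((1::real) gchoose k)) *\<^sub>R y ^ k) sums (\<Sum>k\<in>{0,1}. ((-1)^k * ((1::real) gchoose k)) *\<^sub>R y ^ k)"
    by (rule sums_finite) (auto simp: one_gchoose_ge2)
  hence "(\<lambda>k. \<Sum>i\<le>k. f i * f (k - i)) sums (1 - y)" unfolding tm by simp
  with cp have "s * s = 1 - y" using sums_unique2 by blast
  with ss show ?thesis by blast
qed




locale sys =
  fixes sc :: "complex \<Rightarrow> 'a::{real_normed_algebra_1,banach} \<Rightarrow> 'a"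
    and star :: "'a \<Rightarrow> 'a" and \<omega> :: "'a \<Rightarrow> complex"
    and \<tau> :: "'g::topological_ab_group_add \<Rightarrow> 'a \<Rightarrow> 'a"
    and scH :: "complex \<Rightarrow> 'h::{real_normed_vector,banach} \<Rightarrow> 'h"
    and ip :: "'h \<Rightarrow> 'h \<Rightarrow> complex" and \<iota> :: "'a \<Rightarrow> 'h"
  assumes dyn: "cstar_dynamical_system sc star \<omega> \<tau>"
    and gns: "gns_representation sc star \<omega> scH ip \<iota>"
begin

lemma cstar: "cstar_algebra sc star" using dyn by (simp add: cstar_dynamical_system_def)
lemma state: "is_state sc star \<omega>" using dyn by (simp add: cstar_dynamical_system_def)
lemma hil: "hilbert_space scH ip" using gns by (simp add: gns_representation_def)

lemma sc_add: "sc c (x + y) = sc c x + sc c y"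
  and sc_real: "sc (complex_of_real r) x = r *\<^sub>R x"
  and sc_mult_left: "sc c (a * b) = sc c a * b"
  and star_add: "star (a + b) = star a + star b"
  and star_sc: "star (sc c a) = sc (cnj c) (star a)"
  and star_mult: "star (a * b) = star b * star a"
  and star_star[simp]: "star (star a) = a"
  and cstar_id: "norm (star a * a) = norm a ^ 2"
  using cstar by (auto simp: cstar_algebra_def complex_scalar_def)

lemma star_0[simp]: "star 0 = 0"
  using star_add[of 0 0] by simp
lemma star_minus: "star (- a) = - star a"
  using star_add[of a "-a"] by (simp add: add_eq_0_iff)
lemma star_diff: "star (a - b) = star a - star b"
  using star_add[of a "-b"] by (simp add: star_minus)
lemma star_scaleR: "star (r *\<^sub>R a) = r *\<^sub>R star a"
  using star_sc[of "complex_of_real r" a] by (simp add: sc_real)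
lemma star_1[simp]: "star 1 = 1"
proof -
  have "star 1 = star 1 * star (star 1)" by simp
  also have "\<dots> = star (star 1 * 1)" by (simp only: star_mult)
  finally show ?thesis by simp
qed
lemma star_norm: "norm (star a) = norm a"
proof -
  have le: "norm b \<le> norm (star b)" for b
  proof (cases "b = 0")
    case False
    have "norm b ^ 2 \<le> norm (star b) * norm b" using cstar_id[of b] norm_mult_ineq[of "star b" b] by simp
    then show ?thesis using False by (simp add: power2_eq_square)
  qed simp
  show ?thesis using le[of a] le[of "star a"] by simp
qed

lemma om_add: "\<omega> (a + b) = \<omega> a + \<omega> b"
  and om_sc: "\<omega> (sc c a) = c * \<omega> a"
  and om_pos_Im: "Im (\<omega> (star a * a)) = 0"
  and om_pos_Re: "Re (\<omega> (star a * a)) \<ge> 0"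
  and om_1[simp]: "\<omega> 1 = 1"
  using state by (auto simp: is_state_def)
lemma om_0[simp]: "\<omega> 0 = 0" using om_add[of 0 0] by simp
lemma om_minus: "\<omega> (- a) = - \<omega> a"
  using om_add[of a "-a"] by (simp add: add_eq_0_iff)
lemma om_diff: "\<omega> (a - b) = \<omega> a - \<omega> b"
  using om_add[of a "-b"] by (simp add: om_minus)
lemma om_scaleR: "\<omega> (r *\<^sub>R a) = complex_of_real r * \<omega> a"
  using om_sc[of "complex_of_real r" a] by (simp add: sc_real)

lemma tau_aut: "star_automorphism sc star (\<tau> g)" using dyn by (simp add: cstar_dynamical_system_def)
lemma tau_comp: "\<tau> g (\<tau> h x) = \<tau> (g + h) x"
proof -
  have "\<tau> g \<circ> \<tau> h = \<tau> (g + h)" using dyn by (simp add: cstar_dynamical_system_def)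
  thus ?thesis by (metis comp_apply)
qed
lemma tau_0[simp]: "\<tau> 0 x = x" using dyn by (simp add: cstar_dynamical_system_def)
lemma om_tau[simp]: "\<omega> (\<tau> g a) = \<omega> a" using dyn by (simp add: cstar_dynamical_system_def)
lemma tau_add: "\<tau> g (a + b) = \<tau> g a + \<tau> g b"
  and tau_mult: "\<tau> g (a * b) = \<tau> g a * \<tau> g b"
  and tau_sc: "\<tau> g (sc c a) = sc c (\<tau> g a)"
  and tau_star: "\<tau> g (star a) = star (\<tau> g a)"
  using tau_aut[of g] by (auto simp: star_automorphism_def)
lemma tau_inv[simp]: "\<tau> g (\<tau> (- g) x) = x" by (simp add: tau_comp)
lemma tau_inv'[simp]: "\<tau> (- g) (\<tau> g x) = x" by (simp add: tau_comp)
lemma tau_1[simp]: "\<tau> g 1 = 1"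
proof -
  have "\<tau> g 1 * \<tau> g (\<tau> (-g) 1) = \<tau> g (1 * \<tau> (-g) 1)" by (simp only: tau_mult)
  thus ?thesis by simp
qed
lemma tau_zero[simp]: "\<tau> g 0 = 0" using tau_add[of g 0 0] by simp
lemma tau_minus: "\<tau> g (- a) = - \<tau> g a"
  using tau_add[of g a "-a"] by (simp add: add_eq_0_iff)
lemma tau_diff: "\<tau> g (a - b) = \<tau> g a - \<tau> g b"
  using tau_add[of g a "-b"] by (simp add: tau_minus)
lemma tau_prod_list: "\<tau> g (prod_list xs) = prod_list (map (\<tau> g) xs)"
  by (induction xs) (auto simp: tau_mult)
lemma star_prod_list: "star (prod_list xs) = prod_list (rev (map star xs))"
  by (induction xs) (auto simp: star_mult)

lemma ip_add_r: "ip x (y + z) = ip x y + ip x z"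
  and ip_sc_r: "ip x (scH c y) = c * ip x y"
  and ip_conj: "ip y x = cnj (ip x y)"
  and ip_self: "ip x x = complex_of_real ((norm x)\<^sup>2)"
  and scH_real: "scH (complex_of_real r) x = r *\<^sub>R x"
  and scH_norm: "norm (scH c x) = cmod c * norm x"
  using hil unfolding hilbert_space_def complex_scalar_def by blast+
lemma ip_add_l: "ip (x + y) z = ip x z + ip y z"
proof -
  have "ip (x+y) z = cnj (ip z (x+y))" by (rule ip_conj)
  also have "\<dots> = cnj (ip z x) + cnj (ip z y)" by (simp add: ip_add_r)
  also have "\<dots> = ip x z + ip y z" using ip_conj[of x z] ip_conj[of y z] by simp
  finally show ?thesis .
qed
lemma ip_sc_l: "ip (scH c x) y = cnj c * ip x y"
proof -
  have "ip (scH c x) y = cnj (ip y (scH c x))" by (rule ip_conj)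
  also have "\<dots> = cnj c * cnj (ip y x)" by (simp add: ip_sc_r)
  also have "\<dots> = cnj c * ip x y" using ip_conj[of x y] by simp
  finally show ?thesis .
qed
lemma ip_0_r[simp]: "ip x 0 = 0" using ip_add_r[of x 0 0] by simp
lemma ip_0_l[simp]: "ip 0 x = 0" using ip_add_l[of 0 0 x] by simp
lemma ip_minus_r: "ip x (- y) = - ip x y"
  using ip_add_r[of x y "-y"] by (simp add: add_eq_0_iff)
lemma ip_minus_l: "ip (- x) y = - ip x y"
  using ip_add_l[of x "-x" y] by (simp add: add_eq_0_iff)
lemma ip_diff_r: "ip x (y - z) = ip x y - ip x z"
  using ip_add_r[of x y "-z"] by (simp add: ip_minus_r)
lemma ip_diff_l: "ip (x - y) z = ip x z - ip y z"
  using ip_add_l[of x "-y" z] by (simp add: ip_minus_l)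

lemma cnj_sgn_mult: "cnj (sgn w) * w = complex_of_real (cmod w)"
proof (cases "w = 0")
  case False
  have "cnj (sgn w) * w = cnj w * w / complex_of_real (cmod w)"
    by (simp add: sgn_div_norm scaleR_conv_of_real divide_simps)
  also have "cnj w * w = complex_of_real (cmod w)^2"
    using complex_norm_square[of w] by (simp add: mult.commute)
  finally show ?thesis using False by (simp add: power2_eq_square)
qed simp

lemma ip_Re_le: "Re (ip x y) \<le> norm x * norm y"
proof -
  have "ip (x + y) (x + y) = ip x x + ip x y + ip y x + ip y y"
    by (simp add: ip_add_l ip_add_r)
  hence "(norm (x + y))\<^sup>2 = (norm x)\<^sup>2 + 2 * Re (ip x y) + (norm y)\<^sup>2"
    using ip_self[of x] ip_self[of y] ip_self[of "x+y"] ip_conj[of x y]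
    by (simp add: complex_eq_iff)
  moreover have "(norm (x + y))\<^sup>2 \<le> (norm x + norm y)\<^sup>2"
    by (simp add: norm_triangle_ineq power_mono)
  ultimately show ?thesis by (simp add: power2_sum)
qed

lemma cauchy_schwarz: "cmod (ip x y) \<le> norm x * norm y"
proof -
  define t where "t = cnj (sgn (ip x y))"
  have "ip x (scH t y) = t * ip x y" by (simp add: ip_sc_r)
  also have "\<dots> = complex_of_real (cmod (ip x y))"
    unfolding t_def by (rule cnj_sgn_mult)
  finally have e: "ip x (scH t y) = complex_of_real (cmod (ip x y))" .
  have "cmod (ip x y) = Re (ip x (scH t y))" using e by simp
  also have "\<dots> \<le> norm x * norm (scH t y)" by (rule ip_Re_le)
  also have "norm (scH t y) \<le> norm y"
    by (auto simp: scH_norm t_def norm_sgn mult_left_le_one_le)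
  hence "norm x * norm (scH t y) \<le> norm x * norm y" by (simp add: mult_left_mono)
  finally show ?thesis .
qed

lemma iota_add: "\<iota> (a + b) = \<iota> a + \<iota> b"
  and iota_sc: "\<iota> (sc c a) = scH c (\<iota> a)"
  and iota_ip: "ip (\<iota> a) (\<iota> b) = \<omega> (star a * b)"
  using gns by (auto simp: gns_representation_def)
lemma iota_0[simp]: "\<iota> 0 = 0" using iota_add[of 0 0] by simp
lemma iota_minus: "\<iota> (- a) = - \<iota> a"
  using iota_add[of a "-a"] by (simp add: add_eq_0_iff)
lemma iota_diff: "\<iota> (a - b) = \<iota> a - \<iota> b"
  using iota_add[of a "-b"] by (simp add: iota_minus)
lemma norm_iota_sq: "complex_of_real ((norm (\<iota> a))\<^sup>2) = \<omega> (star a * a)"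
  using ip_self[of "\<iota> a"] iota_ip[of a a] by simp
lemma norm_iota_1[simp]: "norm (\<iota> 1) = 1"
proof -
  have "(norm (\<iota> 1))\<^sup>2 = 1" using norm_iota_sq[of 1] by (metis mult_1 om_1 star_1 of_real_eq_1_iff)
  thus ?thesis using norm_ge_zero[of "\<iota> 1"] by (auto simp: power2_eq_1_iff)
qed
lemma om_star: "\<omega> (star a) = cnj (\<omega> a)"
  using iota_ip[of a 1] iota_ip[of 1 a] ip_conj[of "\<iota> 1" "\<iota> a"] by (metis complex_cnj_cnj mult_1_right mult_1 star_1)

end


context sys begin

lemma Re_om_sq: "Re (\<omega> (star a * a)) = (norm (\<iota> a))\<^sup>2"
  using norm_iota_sq[of a] by (metis Re_complex_of_real)

lemma pos_bound:
  assumes c: "c > (norm b)\<^sup>2"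
  shows "(norm (\<iota> (b * Q)))\<^sup>2 \<le> c * (norm (\<iota> Q))\<^sup>2"
proof -
  have c0: "c > 0" using c by (smt (verit) zero_le_power2)
  define y where "y = (1/c) *\<^sub>R (star b * b)"
  have ny: "norm y < 1" using c c0 by (simp add: y_def cstar_id)
  have sy: "star y = y" by (simp add: y_def star_scaleR star_mult)
  obtain s where ss: "star s = s" and s2: "s * s = 1 - y"
    using sqrt_exists[of y star, OF ny star_add star_scaleR star_norm star_mult star_1 sy] by blast
  define t where "t = sqrt c *\<^sub>R s"
  have e1: "star t * t = c *\<^sub>R 1 - star b * b"
  proof -
    have "star t * t = (sqrt c * sqrt c) *\<^sub>R (s * s)" by (simp add: t_def star_scaleR ss)
    also have "\<dots> = c *\<^sub>R (1 - y)" using c0 s2 by simp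
    also have "\<dots> = c *\<^sub>R 1 - star b * b" using c0 by (simp add: y_def scaleR_diff_right)
    finally show ?thesis .
  qed
  have e2: "star (t * Q) * (t * Q) = c *\<^sub>R (star Q * Q) - star (b * Q) * (b * Q)"
  proof -
    have "star (t * Q) * (t * Q) = star Q * (star t * t) * Q" by (simp add: star_mult mult.assoc)
    also have "\<dots> = c *\<^sub>R (star Q * Q) - star Q * (star b * b) * Q"
      by (simp add: e1 algebra_simps)
    also have "\<dots> = c *\<^sub>R (star Q * Q) - star (b * Q) * (b * Q)" by (simp add: star_mult mult.assoc)
    finally show ?thesis .
  qed
  have "0 \<le> Re (\<omega> (star (t * Q) * (t * Q)))" by (rule om_pos_Re)
  also have "\<dots> = c * Re (\<omega> (star Q * Q)) - Re (\<omega> (star (b * Q) * (b * Q)))"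
    by (simp add: e2 om_diff om_scaleR)
  finally show ?thesis by (simp add: Re_om_sq)
qed

lemma norm_iota_mult: "norm (\<iota> (b * Q)) \<le> norm b * norm (\<iota> Q)"
proof -
  define N where "N = (norm (\<iota> Q))\<^sup>2"
  have N0: "N \<ge> 0" by (simp add: N_def)
  have "(norm (\<iota> (b * Q)))\<^sup>2 \<le> (norm b)\<^sup>2 * N"
  proof (rule field_le_epsilon)
    fix e :: real assume e: "e > 0"
    have "(norm (\<iota> (b * Q)))\<^sup>2 \<le> ((norm b)\<^sup>2 + e / (N + 1)) * N"
      using pos_bound[of b "(norm b)\<^sup>2 + e / (N + 1)" Q] e N0 unfolding N_def by (simp add: add_pos_nonneg)
    also have "\<dots> = (norm b)\<^sup>2 * N + e * (N / (N + 1))" using N0 by (simp add: field_simps)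
    also have "e * (N / (N + 1)) \<le> e * 1" using e N0 by (intro mult_left_mono) auto
    finally show "(norm (\<iota> (b * Q)))\<^sup>2 \<le> (norm b)\<^sup>2 * N + e" by simp
  qed
  hence "(norm (\<iota> (b * Q)))\<^sup>2 \<le> (norm b * norm (\<iota> Q))\<^sup>2" by (simp add: N_def power_mult_distrib)
  thus ?thesis by (rule power2_le_imp_le) simp
qed

lemma norm_iota_le: "norm (\<iota> b) \<le> norm b"
  using norm_iota_mult[of b 1] by simp

lemma norm_iota_tau: "norm (\<iota> (\<tau> g x)) = norm (\<iota> x)"
proof -
  have "(norm (\<iota> (\<tau> g x)))\<^sup>2 = (norm (\<iota> x))\<^sup>2"
    by (simp add: Re_om_sq[symmetric] tau_star[symmetric] tau_mult[symmetric])
  thus ?thesis by (simp add: power2_eq_iff_nonneg)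
qed

lemma norm_iota_tau_mult: "norm (\<iota> (\<tau> g x * Q)) \<le> norm x * norm (\<iota> Q)"
proof -
  have "\<tau> g x * Q = \<tau> g (x * \<tau> (-g) Q)" by (simp add: tau_mult)
  hence "norm (\<iota> (\<tau> g x * Q)) = norm (\<iota> (x * \<tau> (-g) Q))" by (simp add: norm_iota_tau)
  also have "\<dots> \<le> norm x * norm (\<iota> (\<tau> (-g) Q))" by (rule norm_iota_mult)
  finally show ?thesis by (simp add: norm_iota_tau)
qed

lemma om_le: "cmod (\<omega> x) \<le> norm (\<iota> x)"
  using cauchy_schwarz[of "\<iota> 1" "\<iota> x"] by (simp add: iota_ip)

lemma om_norm_le: "cmod (\<omega> x) \<le> norm x"
  using om_le norm_iota_le order_trans by blast

end



locale avg =
  fixes \<mu> :: "'g::{topological_ab_group_add, t2_space, second_countable_topology} measure"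
    and \<Lambda> :: "nat \<Rightarrow> 'g set"
  assumes haar: "haar_measure \<mu>" and folner: "folner_sequence \<mu> \<Lambda>"
begin

lemma sets_mu: "sets \<mu> = sets borel" using haar by (simp add: haar_measure_def)
lemma L_compact: "compact (\<Lambda> n)" using folner by (simp add: folner_sequence_def)
lemma L_sets: "\<Lambda> n \<in> sets \<mu>"
  using L_compact[of n] sets_mu by (simp add: compact_imp_closed borel_closed)
lemma L_fin: "emeasure \<mu> (\<Lambda> n) < \<infinity>"
  using haar L_compact[of n] by (simp add: haar_measure_def)
lemma L_pos: "measure \<mu> (\<Lambda> n) > 0"
proof -
  have "emeasure \<mu> (\<Lambda> n) > 0" using folner by (simp add: folner_sequence_def)
  thus ?thesis using L_fin[of n] by (simp add: measure_def enn2real_positive_iff)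
qed

lemma cont_meas: "continuous_on UNIV f \<Longrightarrow> f \<in> borel_measurable \<mu>"
  using borel_measurable_continuous_onI measurable_cong_sets[OF sets_mu refl] by blast

lemma cont_sint:
  fixes f :: "'g \<Rightarrow> 'b::{banach, second_countable_topology}"
  assumes "continuous_on UNIV f"
  shows "set_integrable \<mu> (\<Lambda> n) f"
proof -
  have "compact (f ` \<Lambda> n)" using assms L_compact[of n]
    by (meson compact_continuous_image continuous_on_subset subset_UNIV)
  then obtain B where B: "\<And>x. x \<in> \<Lambda> n \<Longrightarrow> norm (f x) \<le> B"
    using compact_imp_bounded bounded_iff by (metis imageI)
  show ?thesis unfolding set_integrable_def
    by (rule integrableI_bounded_set_indicator[OF L_sets cont_meas[OF assms] L_fin, of _ B])
       (use B in auto)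
qed

lemma favg_add:
  fixes f h :: "'g \<Rightarrow> 'b::{banach, second_countable_topology}"
  shows "continuous_on UNIV f \<Longrightarrow> continuous_on UNIV h \<Longrightarrow>
    favg \<mu> (\<Lambda> n) (\<lambda>g. f g + h g) = favg \<mu> (\<Lambda> n) f + favg \<mu> (\<Lambda> n) h"
  unfolding favg_def by (simp add: set_integral_add(2)[OF cont_sint cont_sint] scaleR_add_right)

lemma favg_diff:
  fixes f h :: "'g \<Rightarrow> 'b::{banach, second_countable_topology}"
  shows "continuous_on UNIV f \<Longrightarrow> continuous_on UNIV h \<Longrightarrow>
    favg \<mu> (\<Lambda> n) (\<lambda>g. f g - h g) = favg \<mu> (\<Lambda> n) f - favg \<mu> (\<Lambda> n) h"
  unfolding favg_def by (simp add: set_integral_diff(2)[OF cont_sint cont_sint] scaleR_diff_right)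

lemma favg_cmult:
  fixes f :: "'g \<Rightarrow> 'b::{real_normed_field, banach, second_countable_topology}"
  shows "favg \<mu> (\<Lambda> n) (\<lambda>g. c * f g) = c * favg \<mu> (\<Lambda> n) f"
  unfolding favg_def by simp

lemma favg_const: "favg \<mu> (\<Lambda> n) (\<lambda>g. c) = (c :: 'b::{banach, second_countable_topology})"
proof -
  have "(LINT g:\<Lambda> n|\<mu>. c) = measure \<mu> (\<Lambda> n) *\<^sub>R c"
    using set_integral_const[OF L_sets, of n c] L_fin[of n] by simp
  thus ?thesis unfolding favg_def using L_pos[of n] by simp
qed

lemma favg_cnj: "favg \<mu> (\<Lambda> n) (\<lambda>g. cnj (f g)) = cnj (favg \<mu> (\<Lambda> n) f)"
proof -
  have "(\<lambda>x. indicator (\<Lambda> n) x *\<^sub>R cnj (f x)) = (\<lambda>x. cnj (indicator (\<Lambda> n) x *\<^sub>R f x))"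
    by (auto simp: fun_eq_iff complex_cnj_scaleR)
  hence "(LINT g:\<Lambda> n|\<mu>. cnj (f g)) = cnj (LINT g:\<Lambda> n|\<mu>. f g)"
    unfolding set_lebesgue_integral_def by (simp only: Bochner_Integration.integral_cnj)
  thus ?thesis unfolding favg_def by (simp add: complex_cnj_scaleR)
qed

lemma favg_mono:
  fixes f h :: "'g \<Rightarrow> real"
  shows "continuous_on UNIV f \<Longrightarrow> continuous_on UNIV h \<Longrightarrow> (\<And>g. f g \<le> h g) \<Longrightarrow>
    favg \<mu> (\<Lambda> n) f \<le> favg \<mu> (\<Lambda> n) h"
  unfolding favg_def real_scaleR_def using L_pos[of n]
  by (intro mult_left_mono set_integral_mono cont_sint) auto

lemma favg_norm:
  fixes f :: "'g \<Rightarrow> 'b::{banach, second_countable_topology}"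
  shows "norm (favg \<mu> (\<Lambda> n) f) \<le> favg \<mu> (\<Lambda> n) (\<lambda>g. norm (f g))"
proof -
  have "norm (LINT g:\<Lambda> n|\<mu>. f g) \<le> (LINT g:\<Lambda> n|\<mu>. norm (f g))"
    unfolding set_lebesgue_integral_def
    using integral_norm_bound[of \<mu> "\<lambda>g. indicator (\<Lambda> n) g *\<^sub>R f g"]
    by (simp add: abs_mult)
  thus ?thesis unfolding favg_def using L_pos[of n] by (simp add: divide_right_mono)
qed

definition nul :: "('g \<Rightarrow> real) \<Rightarrow> bool" where
  "nul f \<longleftrightarrow> continuous_on UNIV f \<and> (\<forall>g. 0 \<le> f g) \<and> (\<lambda>n. favg \<mu> (\<Lambda> n) f) \<longlonglongrightarrow> 0"

lemma nul_add: "nul f \<Longrightarrow> nul h \<Longrightarrow> nul (\<lambda>g. f g + h g)"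
  unfolding nul_def by (auto simp: favg_add intro!: continuous_on_add tendsto_add_zero)

lemma nul_cmult: "nul f \<Longrightarrow> c \<ge> 0 \<Longrightarrow> nul (\<lambda>g. c * f g)"
  unfolding nul_def by (auto simp: favg_cmult intro!: continuous_on_mult tendsto_mult_right_zero)

lemma nul_zero: "nul (\<lambda>g. 0)"
  unfolding nul_def by (simp add: favg_const)

lemma nul_dom:
  assumes "continuous_on UNIV f" "\<And>g. 0 \<le> f g" "\<And>g. f g \<le> h g" "nul h"
  shows "nul f"
  unfolding nul_def
proof (intro conjI allI assms)
  have h: "continuous_on UNIV h" "(\<lambda>n. favg \<mu> (\<Lambda> n) h) \<longlonglongrightarrow> 0" using assms(4) nul_def by auto
  have "0 \<le> favg \<mu> (\<Lambda> n) f" for n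
    using favg_mono[of "\<lambda>g. 0" f n] assms(1,2) by (simp add: favg_const)
  moreover have "favg \<mu> (\<Lambda> n) f \<le> favg \<mu> (\<Lambda> n) h" for n
    using favg_mono[OF assms(1) h(1) assms(3)] .
  ultimately show "(\<lambda>n. favg \<mu> (\<Lambda> n) f) \<longlonglongrightarrow> 0"
    by (intro tendsto_sandwich[OF _ _ tendsto_const h(2)]) (auto intro: always_eventually)
qed

end



context sys begin
lemma iota_blin: "bounded_linear \<iota>"
proof (rule bounded_linear_intro[of _ 1])
  show "\<iota> (x + y) = \<iota> x + \<iota> y" for x y by (rule iota_add)
  show "\<iota> (r *\<^sub>R x) = r *\<^sub>R \<iota> x" for r x
    using iota_sc[of "complex_of_real r" x] by (simp add: sc_real scH_real)
  show "norm (\<iota> x) \<le> norm x * 1" for x using norm_iota_le by simp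
qed
lemma om_blin: "bounded_linear \<omega>"
proof (rule bounded_linear_intro[of _ 1])
  show "\<omega> (x + y) = \<omega> x + \<omega> y" for x y by (rule om_add)
  show "\<omega> (r *\<^sub>R x) = r *\<^sub>R \<omega> x" for r x
  proof -
    have "r *\<^sub>R \<omega> x = complex_of_real r * \<omega> x" by (simp add: scaleR_conv_of_real)
    thus ?thesis by (simp add: om_scaleR)
  qed
  show "norm (\<omega> x) \<le> norm x * 1" for x using om_norm_le by simp
qed
end

locale main = sys sc star \<omega> \<tau> scH ip \<iota> + avg \<mu> \<Lambda>
  for sc :: "complex \<Rightarrow> 'a::{real_normed_algebra_1,banach} \<Rightarrow> 'a"
    and star :: "'a \<Rightarrow> 'a" and \<omega> :: "'a \<Rightarrow> complex"
    and \<tau> :: "'g::{topological_ab_group_add, t2_space, second_countable_topology} \<Rightarrow> 'a \<Rightarrow> 'a"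
    and scH :: "complex \<Rightarrow> 'h::{real_normed_vector,banach} \<Rightarrow> 'h"
    and ip :: "'h \<Rightarrow> 'h \<Rightarrow> complex" and \<iota> :: "'a \<Rightarrow> 'h"
    and \<mu> :: "'g measure" and \<Lambda> :: "nat \<Rightarrow> 'g set" +
  fixes M :: "('g \<Rightarrow> 'g) set" and k :: nat and \<phi> :: "nat \<Rightarrow> 'g \<Rightarrow> 'g"
  assumes asym: "asymptotically_abelian M \<mu> \<Lambda> \<tau>"
    and transl: "translational M"
    and phiM: "\<forall>j\<in>{1..k}. \<phi> j \<in> M" and phi_inj: "inj_on \<phi> {1..k}"
begin

definition F :: "'g \<Rightarrow> (nat \<times> 'a) list \<Rightarrow> 'a" where
  "F g xs = prod_list (map (\<lambda>(j, x). \<tau> (\<phi> j g) x) xs)"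
definition nb :: "(nat \<times> 'a) list \<Rightarrow> real" where
  "nb xs = prod_list (map (\<lambda>(j, x). norm x) xs)"
definition ok :: "(nat \<times> 'a) list \<Rightarrow> bool" where
  "ok xs \<longleftrightarrow> (\<forall>p\<in>set xs. fst p \<in> {1..k})"

fun bnd :: "'g \<Rightarrow> nat \<Rightarrow> 'a \<Rightarrow> (nat \<times> 'a) list \<Rightarrow> real" where
  "bnd g j p [] = 0"
| "bnd g j p ((i, q) # B) = nb B * norm (q * \<tau> (\<phi> j g - \<phi> i g) p - \<tau> (\<phi> j g - \<phi> i g) p * q)
      + norm q * bnd g j p B"

lemma F_Nil[simp]: "F g [] = 1" by (simp add: F_def)
lemma F_Cons[simp]: "F g ((j, x) # xs) = \<tau> (\<phi> j g) x * F g xs" by (simp add: F_def)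
lemma F_append: "F g (xs @ ys) = F g xs * F g ys" by (simp add: F_def)
lemma nb_Nil[simp]: "nb [] = 1" by (simp add: nb_def)
lemma nb_Cons[simp]: "nb ((j, x) # xs) = norm x * nb xs" by (simp add: nb_def)
lemma nb_nonneg: "nb xs \<ge> 0"
  unfolding nb_def by (induction xs) auto
lemma bnd_nonneg: "bnd g j p B \<ge> 0"
  by (induction B rule: bnd.induct[where ?a0.0 = g and ?a1.0 = j and ?a2.0 = p]) (auto simp: nb_nonneg)

lemma cont_tau: "\<psi> \<in> M \<Longrightarrow> continuous_on UNIV (\<lambda>g. \<tau> (\<psi> g) b)"
  using asym by (simp add: asymptotically_abelian_def)

lemma contF: "ok xs \<Longrightarrow> continuous_on UNIV (\<lambda>g. F g xs)"
proof (induction xs)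
  case Nil then show ?case by simp
next
  case (Cons p xs)
  obtain j x where p: "p = (j, x)" by (cases p)
  have "\<phi> j \<in> M" using Cons.prems phiM by (auto simp: ok_def p)
  moreover have "ok xs" using Cons.prems by (auto simp: ok_def)
  ultimately show ?case unfolding p F_Cons
    by (intro continuous_on_mult cont_tau Cons.IH)
qed

lemma normF: "norm (\<iota> (F g xs * Q)) \<le> nb xs * norm (\<iota> Q)"
proof (induction xs arbitrary: Q)
  case Nil then show ?case by simp
next
  case (Cons p xs)
  obtain j x where p: "p = (j, x)" by (cases p)
  have "norm (\<iota> (F g (p # xs) * Q)) = norm (\<iota> (\<tau> (\<phi> j g) x * (F g xs * Q)))"
    by (simp add: p mult.assoc)
  also have "\<dots> \<le> norm x * norm (\<iota> (F g xs * Q))" by (rule norm_iota_tau_mult)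
  also have "\<dots> \<le> norm x * (nb xs * norm (\<iota> Q))" by (intro mult_left_mono Cons.IH) auto
  finally show ?case by (simp add: p mult.assoc)
qed

lemma normF1: "norm (\<iota> (F g xs)) \<le> nb xs"
  using normF[of g xs 1] by simp

lemma move_bound_gen:
  "norm (\<iota> ((\<tau> (\<phi> j g) p * F g B - F g B * \<tau> (\<phi> j g) p) * W)) \<le> bnd g j p B * norm (\<iota> W)"
proof (induction B arbitrary: W)
  case Nil then show ?case by simp
next
  case (Cons r B)
  obtain i q where r: "r = (i, q)" by (cases r)
  define U where "U = \<tau> (\<phi> j g) p"
  define b where "b = \<tau> (\<phi> i g) q"
  define s where "s = \<phi> j g - \<phi> i g"
  define w where "w = \<tau> s p * q - q * \<tau> s p"
  have Ub: "U * b - b * U = \<tau> (\<phi> i g) w"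
  proof -
    have "\<tau> (\<phi> i g) (\<tau> s p) = U" by (simp add: tau_comp s_def U_def)
    thus ?thesis by (simp add: w_def tau_diff tau_mult b_def)
  qed
  have split: "(U * F g (r # B) - F g (r # B) * U) * W
      = \<tau> (\<phi> i g) w * (F g B * W) + b * ((U * F g B - F g B * U) * W)"
    by (simp add: r b_def[symmetric] Ub[symmetric] algebra_simps)
  have "norm (\<iota> ((U * F g (r # B) - F g (r # B) * U) * W))
      \<le> norm (\<iota> (\<tau> (\<phi> i g) w * (F g B * W))) + norm (\<iota> (b * ((U * F g B - F g B * U) * W)))"
    unfolding split iota_add by (rule norm_triangle_ineq)
  also have "\<dots> \<le> norm w * (nb B * norm (\<iota> W)) + norm q * (bnd g j p B * norm (\<iota> W))"
  proof (rule add_mono)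
    show "norm (\<iota> (\<tau> (\<phi> i g) w * (F g B * W))) \<le> norm w * (nb B * norm (\<iota> W))"
      using norm_iota_tau_mult[of "\<phi> i g" w "F g B * W"] normF[of g B W]
      by (meson mult_left_mono norm_ge_zero order_trans)
    show "norm (\<iota> (b * ((U * F g B - F g B * U) * W))) \<le> norm q * (bnd g j p B * norm (\<iota> W))"
      using norm_iota_tau_mult[of "\<phi> i g" q] Cons.IH[of W] unfolding b_def U_def
      by (meson mult_left_mono norm_ge_zero order_trans)
  qed
  also have "\<dots> = bnd g j p (r # B) * norm (\<iota> W)"
    by (simp add: r s_def[symmetric] w_def norm_minus_commute algebra_simps)
  finally show ?case unfolding U_def .
qed

lemma move_bound:
  "norm (\<iota> (F g ((j, p) # B @ R)) - \<iota> (F g (B @ (j, p) # R))) \<le> bnd g j p B * nb R"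
proof -
  have "\<iota> (F g ((j, p) # B @ R)) - \<iota> (F g (B @ (j, p) # R))
      = \<iota> ((\<tau> (\<phi> j g) p * F g B - F g B * \<tau> (\<phi> j g) p) * F g R)"
    by (simp add: F_append iota_diff[symmetric] algebra_simps)
  also have "norm \<dots> \<le> bnd g j p B * norm (\<iota> (F g R))" by (rule move_bound_gen)
  also have "\<dots> \<le> bnd g j p B * nb R" by (intro mult_left_mono normF1 bnd_nonneg)
  finally show ?thesis .
qed

end


context main begin

lemmas iota_cont = bounded_linear.continuous_on[OF iota_blin]
lemmas om_cont = bounded_linear.continuous_on[OF om_blin]

lemma nul_comm: "\<psi> \<in> M \<Longrightarrow> nul (\<lambda>g. norm (q * \<tau> (\<psi> g) p - \<tau> (\<psi> g) p * q))"
  unfolding nul_def using asym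
  by (auto simp: asymptotically_abelian_def intro!: continuous_on_norm continuous_on_diff
        continuous_on_mult cont_tau)

lemma bnd_nul: "j \<in> {1..k} \<Longrightarrow> ok B \<Longrightarrow> j \<notin> fst ` set B \<Longrightarrow> nul (\<lambda>g. bnd g j p B)"
proof (induction B)
  case Nil then show ?case by (simp add: nul_zero)
next
  case (Cons r B)
  obtain i q where r: "r = (i, q)" by (cases r)
  have i: "i \<in> {1..k}" "i \<noteq> j" using Cons.prems by (auto simp: ok_def r)
  hence "\<phi> j \<noteq> \<phi> i" using phi_inj Cons.prems(1) inj_onD[of \<phi> "{1..k}" j i] by metis
  hence "(\<lambda>g. \<phi> j g - \<phi> i g) \<in> M" using transl phiM i Cons.prems(1) by (auto simp: translational_def)
  hence n1: "nul (\<lambda>g. norm (q * \<tau> (\<phi> j g - \<phi> i g) p - \<tau> (\<phi> j g - \<phi> i g) p * q))"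
    using nul_comm[of "\<lambda>g. \<phi> j g - \<phi> i g"] by simp
  have n2: "nul (\<lambda>g. bnd g j p B)" using Cons by (auto simp: ok_def)
  show ?case unfolding r bnd.simps
    by (intro nul_add nul_cmult n1 n2 nb_nonneg norm_ge_zero)
qed

definition Zl :: "(nat \<Rightarrow> 'a) \<Rightarrow> (nat \<Rightarrow> 'a) \<Rightarrow> nat \<Rightarrow> (nat \<times> 'a) list" where
  "Zl a c m = rev (map (\<lambda>j. (j, star (a j))) [1..<m+1]) @ map (\<lambda>j. (j, c j)) [1..<m+1]"
definition Yl :: "(nat \<Rightarrow> 'a) \<Rightarrow> (nat \<Rightarrow> 'a) \<Rightarrow> nat \<Rightarrow> (nat \<times> 'a) list" where
  "Yl a c m = map (\<lambda>j. (j, star (a j) * c j)) [1..<m+1]"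

lemma Zl_Suc: "Zl a c (Suc m) @ R = (Suc m, star (a (Suc m))) # (Zl a c m @ (Suc m, c (Suc m)) # R)"
  by (simp add: Zl_def)
lemma Yl_Suc: "Yl a c (Suc m) @ R = Yl a c m @ (Suc m, star (a (Suc m)) * c (Suc m)) # R"
  by (simp add: Yl_def)
lemma Zl_idx: "fst ` set (Zl a c m) \<subseteq> {1..m}" by (auto simp: Zl_def)
lemma Yl_idx: "fst ` set (Yl a c m) \<subseteq> {1..m}" by (auto simp: Yl_def)

lemma ok_append: "ok (xs @ ys) \<longleftrightarrow> ok xs \<and> ok ys" by (auto simp: ok_def)
lemma ok_sub: "fst ` set xs \<subseteq> {1..m} \<Longrightarrow> m \<le> k \<Longrightarrow> ok xs" by (auto simp: ok_def)

lemma claim: "m \<le> k \<Longrightarrow> ok R \<Longrightarrow>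
  nul (\<lambda>g. norm (\<iota> (F g (Zl a c m @ R)) - \<iota> (F g (Yl a c m @ R))))"
proof (induction m arbitrary: R)
  case 0 then show ?case by (simp add: Zl_def Yl_def nul_zero)
next
  case (Suc m)
  define R1 where "R1 = (Suc m, c (Suc m)) # R"
  define R2 where "R2 = (Suc m, star (a (Suc m)) * c (Suc m)) # R"
  have okR: "ok R1" "ok R2" using Suc.prems by (auto simp: ok_def R1_def R2_def)
  have okZ: "ok (Zl a c m)" "ok (Yl a c m)" using Suc.prems Zl_idx Yl_idx ok_sub
    by (meson Suc_leD)+
  have IH: "nul (\<lambda>g. norm (\<iota> (F g (Zl a c m @ R2)) - \<iota> (F g (Yl a c m @ R2))))"
    using Suc okR by simp
  have B: "nul (\<lambda>g. nb R1 * bnd g (Suc m) (star (a (Suc m))) (Zl a c m))"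
    using Suc.prems okZ Zl_idx[of a c m] by (intro nul_cmult bnd_nul nb_nonneg) auto
  have FZ: "F g (Zl a c m @ (Suc m, star (a (Suc m))) # R1) = F g (Zl a c m @ R2)" for g
    by (simp add: R1_def R2_def F_append tau_mult mult.assoc)
  show ?case
  proof (rule nul_dom[OF _ _ _ nul_add[OF B IH]])
    show "continuous_on UNIV (\<lambda>g. norm (\<iota> (F g (Zl a c (Suc m) @ R)) - \<iota> (F g (Yl a c (Suc m) @ R))))"
      using okZ okR Suc.prems
      by (intro continuous_on_norm continuous_on_diff iota_cont contF)
         (auto simp: Zl_Suc Yl_Suc ok_append R1_def R2_def ok_def)
    fix g
    show "0 \<le> norm (\<iota> (F g (Zl a c (Suc m) @ R)) - \<iota> (F g (Yl a c (Suc m) @ R)))" by simp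
    have "norm (\<iota> (F g (Zl a c (Suc m) @ R)) - \<iota> (F g (Yl a c (Suc m) @ R)))
      \<le> norm (\<iota> (F g ((Suc m, star (a (Suc m))) # Zl a c m @ R1)) - \<iota> (F g (Zl a c m @ (Suc m, star (a (Suc m))) # R1)))
        + norm (\<iota> (F g (Zl a c m @ R2)) - \<iota> (F g (Yl a c m @ R2)))"
      unfolding Zl_Suc Yl_Suc FZ R1_def[symmetric] R2_def[symmetric] by (rule norm_diff_triangle_le[OF order_refl order_refl])
    also have "\<dots> \<le> bnd g (Suc m) (star (a (Suc m))) (Zl a c m) * nb R1
        + norm (\<iota> (F g (Zl a c m @ R2)) - \<iota> (F g (Yl a c m @ R2)))"
      by (intro add_mono move_bound order_refl)
    finally show "norm (\<iota> (F g (Zl a c (Suc m) @ R)) - \<iota> (F g (Yl a c (Suc m) @ R)))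
      \<le> nb R1 * bnd g (Suc m) (star (a (Suc m))) (Zl a c m)
        + norm (\<iota> (F g (Zl a c m @ R2)) - \<iota> (F g (Yl a c m @ R2)))" by (simp add: mult.commute)
  qed
qed

end


context main begin

lemma star_F: "star (F g xs) = F g (rev (map (\<lambda>(j, x). (j, star x)) xs))"
proof (induction xs)
  case Nil then show ?case by simp
next
  case (Cons p xs)
  obtain j x where p: "p = (j, x)" by (cases p)
  show ?case using Cons by (simp add: p star_mult F_append tau_star)
qed

lemma ok_map: "ok (map (\<lambda>j. (j, b j)) [1..<k+1])" by (auto simp: ok_def)

lemma mixing_app:
  assumes mixing: "\<And>b :: nat \<Rightarrow> 'a. \<And>\<psi> :: nat \<Rightarrow> 'g \<Rightarrow> 'g.
        \<psi> 0 = (\<lambda>g. 0) \<Longrightarrow> (\<forall>j\<in>{1..<k}. \<psi> j \<in> M) \<Longrightarrow> inj_on \<psi> {0..<k} \<Longrightarrow>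
        (\<lambda>n. favg \<mu> (\<Lambda> n) (\<lambda>g. \<omega> (prod_list (map (\<lambda>j. \<tau> (\<psi> j g) (b j)) [0..<k]))))
          \<longlonglongrightarrow> (\<Prod>j<k. \<omega> (b j))"
  shows "(\<lambda>n. favg \<mu> (\<Lambda> n) (\<lambda>g. \<omega> (F g (map (\<lambda>j. (j, b j)) [1..<k+1])))) \<longlonglongrightarrow> (\<Prod>j=1..k. \<omega> (b j))"
proof (cases "k = 0")
  case True
  then show ?thesis by (simp add: F_def favg_const)
next
  case False
  define \<psi> where "\<psi> j = (if j = 0 then (\<lambda>g. 0) else (\<lambda>g. \<phi> (Suc j) g - \<phi> 1 g))" for j
  define b' where "b' j = b (Suc j)" for j
  have phi_ne: "\<phi> i \<noteq> \<phi> j" if "i \<in> {1..k}" "j \<in> {1..k}" "i \<noteq> j" for i j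
    using phi_inj that inj_onD[of \<phi> "{1..k}" i j] by metis
  have p0: "\<psi> 0 = (\<lambda>g. 0)" by (simp add: \<psi>_def)
  have pM: "\<forall>j\<in>{1..<k}. \<psi> j \<in> M"
  proof
    fix j assume j: "j \<in> {1..<k}"
    hence "\<phi> (Suc j) \<noteq> \<phi> 1" using phi_ne[of "Suc j" 1] by auto
    moreover have "\<phi> (Suc j) \<in> M" "\<phi> 1 \<in> M" using phiM j False by auto
    ultimately show "\<psi> j \<in> M" using transl j by (auto simp: translational_def \<psi>_def)
  qed
  have pinj: "inj_on \<psi> {0..<k}"
  proof (rule inj_onI)
    fix i j assume ij: "i \<in> {0..<k}" "j \<in> {0..<k}" "\<psi> i = \<psi> j"
    show "i = j"
    proof (rule ccontr)
      assume ne: "i \<noteq> j"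
      have "\<phi> (Suc i) = \<phi> (Suc j)"
      proof (rule ext)
        fix g
        have "\<psi> i g = \<psi> j g" using ij by simp
        thus "\<phi> (Suc i) g = \<phi> (Suc j) g"
          using ne by (cases "i = 0"; cases "j = 0") (auto simp: \<psi>_def)
      qed
      thus False using phi_ne[of "Suc i" "Suc j"] ij ne by auto
    qed
  qed
  have eq: "\<omega> (F g (map (\<lambda>j. (j, b j)) [1..<k+1])) =
      \<omega> (prod_list (map (\<lambda>j. \<tau> (\<psi> j g) (b' j)) [0..<k]))" for g
  proof -
    have "\<omega> (F g (map (\<lambda>j. (j, b j)) [1..<k+1])) = \<omega> (\<tau> (- \<phi> 1 g) (F g (map (\<lambda>j. (j, b j)) [1..<k+1])))"
      by simp
    also have "\<tau> (- \<phi> 1 g) (F g (map (\<lambda>j. (j, b j)) [1..<k+1]))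
        = prod_list (map (\<lambda>j. \<tau> (\<psi> j g) (b' j)) [0..<k])"
    proof -
      have "[1..<k+1] = map Suc [0..<k]" by (simp add: map_Suc_upt)
      hence "\<tau> (- \<phi> 1 g) (F g (map (\<lambda>j. (j, b j)) [1..<k+1]))
          = prod_list (map (\<lambda>j. \<tau> (- \<phi> 1 g) (\<tau> (\<phi> (Suc j) g) (b (Suc j)))) [0..<k])"
        by (simp add: F_def tau_prod_list o_def)
      also have "\<dots> = prod_list (map (\<lambda>j. \<tau> (\<psi> j g) (b' j)) [0..<k])"
        by (intro arg_cong[where f=prod_list] map_cong refl)
           (auto simp: tau_comp \<psi>_def b'_def)
      finally show ?thesis .
    qed
    finally show ?thesis .
  qed
  have "(\<lambda>n. favg \<mu> (\<Lambda> n) (\<lambda>g. \<omega> (prod_list (map (\<lambda>j. \<tau> (\<psi> j g) (b' j)) [0..<k]))))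
      \<longlonglongrightarrow> (\<Prod>j<k. \<omega> (b' j))" by (rule mixing[OF p0 pM pinj])
  moreover have "(\<Prod>j<k. \<omega> (b' j)) = (\<Prod>j=1..k. \<omega> (b j))"
    by (simp add: b'_def prod.atLeast1_atMost_eq)
  ultimately show ?thesis unfolding eq by (simp only:)
qed

end


context main begin

lemma cont_omF: "ok xs \<Longrightarrow> continuous_on UNIV (\<lambda>g. \<omega> (F g xs))"
  by (intro om_cont contF)

lemma final:
  assumes Mhom: "\<forall>\<psi>\<in>M. group_hom \<psi>"
    and mixing: "\<And>b :: nat \<Rightarrow> 'a. \<And>\<psi> :: nat \<Rightarrow> 'g \<Rightarrow> 'g.
        \<psi> 0 = (\<lambda>g. 0) \<Longrightarrow> (\<forall>j\<in>{1..<k}. \<psi> j \<in> M) \<Longrightarrow> inj_on \<psi> {0..<k} \<Longrightarrow>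
        (\<lambda>n. favg \<mu> (\<Lambda> n) (\<lambda>g. \<omega> (prod_list (map (\<lambda>j. \<tau> (\<psi> j g) (b j)) [0..<k]))))
          \<longlonglongrightarrow> (\<Prod>j<k. \<omega> (b j))"
  shows "(\<lambda>n. favg \<mu> (\<Lambda> n)
              (\<lambda>g. ip (\<iota> (prod_list (map (\<lambda>j. \<tau> (\<phi> j g) (a j)) [1..<k+1]))
                        - scH (\<Prod>j=1..k. \<omega> (a j)) (\<iota> 1))
                     (\<iota> (prod_list (map (\<lambda>j. \<tau> (\<phi> j (g + h)) (a j)) [1..<k+1]))
                        - scH (\<Prod>j=1..k. \<omega> (a j)) (\<iota> 1))))
           \<longlonglongrightarrow> (\<Prod>j=1..k. \<omega> (star (a j) * \<tau> (\<phi> j h) (a j)))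
               - complex_of_real ((cmod (\<Prod>j=1..k. \<omega> (a j)))\<^sup>2)"
proof -
  define \<kappa> where "\<kappa> = (\<Prod>j=1..k. \<omega> (a j))"
  define c where "c j = \<tau> (\<phi> j h) (a j)" for j
  define L where "L = [1..<k+1]"
  define X where "X = map (\<lambda>j. (j, a j)) L"
  define C where "C = map (\<lambda>j. (j, c j)) L"
  define P where "P = (\<Prod>j=1..k. \<omega> (star (a j) * c j))"
  have okX: "ok X" and okC: "ok C" and okZ: "ok (Zl a c k)" and okY: "ok (Yl a c k)"
    using ok_map[of a] ok_map[of c] Zl_idx[of a c k] Yl_idx[of a c k] ok_sub
    by (auto simp: X_def C_def L_def)
  have x_eq: "prod_list (map (\<lambda>j. \<tau> (\<phi> j g) (a j)) L) = F g X" for g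
    by (simp add: F_def X_def o_def)
  have y_eq: "prod_list (map (\<lambda>j. \<tau> (\<phi> j (g + h)) (a j)) L) = F g C" for g
  proof -
    have "map (\<lambda>j. \<tau> (\<phi> j (g + h)) (a j)) L = map (\<lambda>j. \<tau> (\<phi> j g) (c j)) L"
    proof (rule map_cong[OF refl])
      fix j assume "j \<in> set L"
      hence "\<phi> j \<in> M" using phiM by (auto simp: L_def)
      hence "\<phi> j (g + h) = \<phi> j g + \<phi> j h" using Mhom by (auto simp: group_hom_def)
      thus "\<tau> (\<phi> j (g + h)) (a j) = \<tau> (\<phi> j g) (c j)" by (simp add: c_def tau_comp)
    qed
    moreover have "F g C = prod_list (map (\<lambda>j. \<tau> (\<phi> j g) (c j)) L)" by (simp add: F_def C_def o_def)
    ultimately show ?thesis by (simp only:)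
  qed
  have z_eq: "star (F g X) * F g C = F g (Zl a c k)" for g
    by (simp add: star_F F_append Zl_def X_def C_def L_def rev_map o_def)
  define K where "K = scH \<kappa> (\<iota> 1)"
  have integrand: "ip (\<iota> (F g X) - K) (\<iota> (F g C) - K)
      = \<omega> (F g (Zl a c k)) - \<kappa> * cnj (\<omega> (F g X)) - cnj \<kappa> * \<omega> (F g C) + cnj \<kappa> * \<kappa>" for g
  proof -
    have "ip (\<iota> (F g X) - K) (\<iota> (F g C) - K)
      = ip (\<iota> (F g X)) (\<iota> (F g C)) - ip (\<iota> (F g X)) K - (ip K (\<iota> (F g C)) - ip K K)"
      by (simp add: ip_diff_l ip_diff_r)
    also have "ip (\<iota> (F g X)) (\<iota> (F g C)) = \<omega> (F g (Zl a c k))" by (simp add: iota_ip z_eq)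
    also have "ip (\<iota> (F g X)) K = \<kappa> * cnj (\<omega> (F g X))" by (simp add: K_def ip_sc_r iota_ip om_star)
    also have "ip K (\<iota> (F g C)) = cnj \<kappa> * \<omega> (F g C)" by (simp add: K_def ip_sc_l iota_ip)
    also have "ip K K = cnj \<kappa> * \<kappa>" by (simp add: K_def ip_sc_l ip_sc_r iota_ip)
    finally show ?thesis by simp
  qed
  have TY: "(\<lambda>n. favg \<mu> (\<Lambda> n) (\<lambda>g. \<omega> (F g (Yl a c k)))) \<longlonglongrightarrow> P"
    unfolding Yl_def P_def by (rule mixing_app[OF mixing])
  have nulZ: "nul (\<lambda>g. norm (\<iota> (F g (Zl a c k)) - \<iota> (F g (Yl a c k))))"
    using claim[of k "[]" a c] by (simp add: ok_def)
  have TD: "(\<lambda>n. favg \<mu> (\<Lambda> n) (\<lambda>g. \<omega> (F g (Zl a c k))) - favg \<mu> (\<Lambda> n) (\<lambda>g. \<omega> (F g (Yl a c k)))) \<longlonglongrightarrow> 0"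
  proof (rule Lim_null_comparison)
    show "(\<lambda>n. favg \<mu> (\<Lambda> n) (\<lambda>g. norm (\<iota> (F g (Zl a c k)) - \<iota> (F g (Yl a c k))))) \<longlonglongrightarrow> 0"
      using nulZ by (simp add: nul_def)
    show "\<forall>\<^sub>F n in sequentially. norm (favg \<mu> (\<Lambda> n) (\<lambda>g. \<omega> (F g (Zl a c k))) - favg \<mu> (\<Lambda> n) (\<lambda>g. \<omega> (F g (Yl a c k))))
        \<le> favg \<mu> (\<Lambda> n) (\<lambda>g. norm (\<iota> (F g (Zl a c k)) - \<iota> (F g (Yl a c k))))"
    proof (rule always_eventually, rule allI)
      fix n
      have "norm (favg \<mu> (\<Lambda> n) (\<lambda>g. \<omega> (F g (Zl a c k))) - favg \<mu> (\<Lambda> n) (\<lambda>g. \<omega> (F g (Yl a c k))))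
          = norm (favg \<mu> (\<Lambda> n) (\<lambda>g. \<omega> (F g (Zl a c k)) - \<omega> (F g (Yl a c k))))"
        by (simp add: favg_diff cont_omF okZ okY)
      also have "\<dots> \<le> favg \<mu> (\<Lambda> n) (\<lambda>g. norm (\<omega> (F g (Zl a c k)) - \<omega> (F g (Yl a c k))))"
        by (rule favg_norm)
      also have "\<dots> \<le> favg \<mu> (\<Lambda> n) (\<lambda>g. norm (\<iota> (F g (Zl a c k)) - \<iota> (F g (Yl a c k))))"
      proof (rule favg_mono)
        show "continuous_on UNIV (\<lambda>g. norm (\<omega> (F g (Zl a c k)) - \<omega> (F g (Yl a c k))))"
          by (intro continuous_on_norm continuous_on_diff cont_omF okZ okY)
        show "continuous_on UNIV (\<lambda>g. norm (\<iota> (F g (Zl a c k)) - \<iota> (F g (Yl a c k))))"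
          using nulZ by (simp add: nul_def)
        fix g
        show "norm (\<omega> (F g (Zl a c k)) - \<omega> (F g (Yl a c k))) \<le> norm (\<iota> (F g (Zl a c k)) - \<iota> (F g (Yl a c k)))"
          using om_le[of "F g (Zl a c k) - F g (Yl a c k)"] by (simp add: om_diff iota_diff)
      qed
      finally show "norm (favg \<mu> (\<Lambda> n) (\<lambda>g. \<omega> (F g (Zl a c k))) - favg \<mu> (\<Lambda> n) (\<lambda>g. \<omega> (F g (Yl a c k))))
        \<le> favg \<mu> (\<Lambda> n) (\<lambda>g. norm (\<iota> (F g (Zl a c k)) - \<iota> (F g (Yl a c k))))" .
    qed
  qed
  have TZ: "(\<lambda>n. favg \<mu> (\<Lambda> n) (\<lambda>g. \<omega> (F g (Zl a c k)))) \<longlonglongrightarrow> P"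
    using tendsto_add[OF TD TY] by simp
  have TX: "(\<lambda>n. favg \<mu> (\<Lambda> n) (\<lambda>g. \<omega> (F g X))) \<longlonglongrightarrow> \<kappa>"
    unfolding X_def L_def \<kappa>_def by (rule mixing_app[OF mixing])
  have TC: "(\<lambda>n. favg \<mu> (\<Lambda> n) (\<lambda>g. \<omega> (F g C))) \<longlonglongrightarrow> \<kappa>"
  proof -
    have "(\<lambda>n. favg \<mu> (\<Lambda> n) (\<lambda>g. \<omega> (F g C))) \<longlonglongrightarrow> (\<Prod>j=1..k. \<omega> (c j))"
      unfolding C_def L_def by (rule mixing_app[OF mixing])
    moreover have "(\<Prod>j=1..k. \<omega> (c j)) = \<kappa>" by (simp add: c_def \<kappa>_def)
    ultimately show ?thesis by simp
  qed
  have favg_eq: "favg \<mu> (\<Lambda> n) (\<lambda>g. ip (\<iota> (F g X) - K) (\<iota> (F g C) - K))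
      = favg \<mu> (\<Lambda> n) (\<lambda>g. \<omega> (F g (Zl a c k))) - \<kappa> * cnj (favg \<mu> (\<Lambda> n) (\<lambda>g. \<omega> (F g X)))
        - cnj \<kappa> * favg \<mu> (\<Lambda> n) (\<lambda>g. \<omega> (F g C)) + cnj \<kappa> * \<kappa>" for n
  proof -
    have c1: "continuous_on UNIV (\<lambda>g. \<omega> (F g (Zl a c k)))" using cont_omF okZ by blast
    have c2: "continuous_on UNIV (\<lambda>g. \<kappa> * cnj (\<omega> (F g X)))"
      by (intro continuous_on_mult continuous_on_const continuous_on_cnj cont_omF okX)
    have c3: "continuous_on UNIV (\<lambda>g. cnj \<kappa> * \<omega> (F g C))"
      by (intro continuous_on_mult continuous_on_const cont_omF okC)
    have "favg \<mu> (\<Lambda> n) (\<lambda>g. ip (\<iota> (F g X) - K) (\<iota> (F g C) - K))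
        = favg \<mu> (\<Lambda> n) (\<lambda>g. (\<omega> (F g (Zl a c k)) - \<kappa> * cnj (\<omega> (F g X)) - cnj \<kappa> * \<omega> (F g C)) + cnj \<kappa> * \<kappa>)"
      by (simp add: integrand)
    also have "\<dots> = favg \<mu> (\<Lambda> n) (\<lambda>g. \<omega> (F g (Zl a c k)) - \<kappa> * cnj (\<omega> (F g X)) - cnj \<kappa> * \<omega> (F g C))
        + cnj \<kappa> * \<kappa>"
      by (subst favg_add) (auto intro!: continuous_on_diff c1 c2 c3 simp: favg_const)
    also have "favg \<mu> (\<Lambda> n) (\<lambda>g. \<omega> (F g (Zl a c k)) - \<kappa> * cnj (\<omega> (F g X)) - cnj \<kappa> * \<omega> (F g C))
        = favg \<mu> (\<Lambda> n) (\<lambda>g. \<omega> (F g (Zl a c k))) - favg \<mu> (\<Lambda> n) (\<lambda>g. \<kappa> * cnj (\<omega> (F g X)))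
          - favg \<mu> (\<Lambda> n) (\<lambda>g. cnj \<kappa> * \<omega> (F g C))"
      by (simp add: favg_diff continuous_on_diff c1 c2 c3)
    also have "favg \<mu> (\<Lambda> n) (\<lambda>g. \<kappa> * cnj (\<omega> (F g X))) = \<kappa> * cnj (favg \<mu> (\<Lambda> n) (\<lambda>g. \<omega> (F g X)))"
      by (simp add: favg_cmult favg_cnj)
    also have "favg \<mu> (\<Lambda> n) (\<lambda>g. cnj \<kappa> * \<omega> (F g C)) = cnj \<kappa> * favg \<mu> (\<Lambda> n) (\<lambda>g. \<omega> (F g C))"
      by (simp add: favg_cmult)
    finally show ?thesis .
  qed
  have lim: "(\<lambda>n. favg \<mu> (\<Lambda> n) (\<lambda>g. ip (\<iota> (F g X) - K) (\<iota> (F g C) - K)))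
      \<longlonglongrightarrow> P - \<kappa> * cnj \<kappa> - cnj \<kappa> * \<kappa> + cnj \<kappa> * \<kappa>"
    unfolding favg_eq
    by (intro tendsto_intros TZ TX TC)
  have rhs: "P - \<kappa> * cnj \<kappa> - cnj \<kappa> * \<kappa> + cnj \<kappa> * \<kappa> = P - complex_of_real ((cmod \<kappa>)\<^sup>2)"
    using complex_norm_square[of \<kappa>] by simp
  show ?thesis
    unfolding y_eq[unfolded L_def] x_eq[unfolded L_def] \<kappa>_def[symmetric]
    using lim[unfolded rhs] unfolding K_def P_def c_def .
qed

end


theorem proposition4p4:
  fixes \<mu> :: "'g::{topological_ab_group_add, t2_space, second_countable_topology} measure"
    and \<Lambda> :: "nat \<Rightarrow> 'g set"
    and sc :: "complex \<Rightarrow> 'a::{real_normed_algebra_1, banach} \<Rightarrow> 'a"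
    and star :: "'a \<Rightarrow> 'a"
    and \<omega> :: "'a \<Rightarrow> complex"
    and \<tau> :: "'g \<Rightarrow> 'a \<Rightarrow> 'a"
    and M :: "('g \<Rightarrow> 'g) set"
    and scH :: "complex \<Rightarrow> 'h::{real_normed_vector, banach} \<Rightarrow> 'h"
    and ip :: "'h \<Rightarrow> 'h \<Rightarrow> complex"
    and \<iota> :: "'a \<Rightarrow> 'h"
    and k :: nat
    and a :: "nat \<Rightarrow> 'a"
    and \<phi> :: "nat \<Rightarrow> 'g \<Rightarrow> 'g"
  assumes lc: "locally_compact_space (euclidean :: 'g topology)"
    and haar: "haar_measure \<mu>"
    and folner: "folner_sequence \<mu> \<Lambda>"
    and dyn: "cstar_dynamical_system sc star \<omega> \<tau>"
    and Mhom: "\<forall>\<psi>\<in>M. group_hom \<psi>"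
    and asym: "asymptotically_abelian M \<mu> \<Lambda> \<tau>"
    and transl: "translational M"
    and gns: "gns_representation sc star \<omega> scH ip \<iota>"
    and mixing: "\<And>b :: nat \<Rightarrow> 'a. \<And>\<psi> :: nat \<Rightarrow> 'g \<Rightarrow> 'g.
        \<psi> 0 = (\<lambda>g. 0) \<Longrightarrow> (\<forall>j\<in>{1..<k}. \<psi> j \<in> M) \<Longrightarrow> inj_on \<psi> {0..<k} \<Longrightarrow>
        (\<lambda>n. favg \<mu> (\<Lambda> n) (\<lambda>g. \<omega> (prod_list (map (\<lambda>j. \<tau> (\<psi> j g) (b j)) [0..<k]))))
          \<longlonglongrightarrow> (\<Prod>j<k. \<omega> (b j))"
    and phiM: "\<forall>j\<in>{1..k}. \<phi> j \<in> M"
    and phi_inj: "inj_on \<phi> {1..k}"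
  shows "\<forall>h. (\<lambda>n. favg \<mu> (\<Lambda> n)
              (\<lambda>g. ip (\<iota> (prod_list (map (\<lambda>j. \<tau> (\<phi> j g) (a j)) [1..<k+1]))
                        - scH (\<Prod>j=1..k. \<omega> (a j)) (\<iota> 1))
                     (\<iota> (prod_list (map (\<lambda>j. \<tau> (\<phi> j (g + h)) (a j)) [1..<k+1]))
                        - scH (\<Prod>j=1..k. \<omega> (a j)) (\<iota> 1))))
           \<longlonglongrightarrow> (\<Prod>j=1..k. \<omega> (star (a j) * \<tau> (\<phi> j h) (a j)))
               - complex_of_real ((cmod (\<Prod>j=1..k. \<omega> (a j)))\<^sup>2)"
proof -
  interpret main sc star \<omega> \<tau> scH ip \<iota> \<mu> \<Lambda> M k \<phi>
    by unfold_locales (rule dyn gns haar folner asym transl phiM phi_inj)+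
  show ?thesis by (intro allI final[OF Mhom mixing])
qed

end
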